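(* Let $\ell \ge 1$ and let $\mathcal{O} = \{\mathbf{p}^t, \mathbf{x}^t\}_{t=1}^T$ be a data set with $\mathbf{p}^t \in \mathbb{R}^\ell_{++}$ and $\mathbf{x}^t \in \mathbb{R}^\ell_+ \setminus \{\mathbf{0}\}$ for all $t$, and let $\mathbf{e} = \{e^t\}_{t=1}^T$ with $e^t \in (0,1]$ for all $t$. Then $\mathcal{O}$ obeys $\mathbf{e}$-GARP whenever any of the following conditions holds: (i) there is a consumption space $X \subseteq \mathbb{R}^\ell_+$ (containing all $\mathbf{x}^t$) and a utility function $U : X \to \mathbb{R}$ that both $\mathbf{e}$-rationalizes and $\mathbf{e}$-cost-rationalizes $\mathcal{O}$ (on $X$); (ii) $\mathcal{O}$ is $\mathbf{e}$-rationalizable (on $X=\mathbb{R}^\ell_+$) by a locally nonsatiated utility function $U : \mathbb{R}^\ell_+ \to \mathbb{R}$; (iii) $\mathcal{O}$ is $\mathbf{e}$-cost-rationalizable (on $X=\mathbb{R}^\ell_+$) by a continuous utility function $U : \mathbb{R}^\ell_+ \to \mathbb{R}$.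
   Context: For a consumption space $X\subseteq\mathbb{R}^\ell_+$ and $U:X\to\mathbb{R}$: $U$ $\mathbf{e}$-rationalizes $\mathcal{O}$ if for every $t$, $U(\mathbf{x}^t)\ge U(\mathbf{x})$ for all $\mathbf{x}\in X$ with $\mathbf{p}^t\cdot\mathbf{x}\le e^t\,\mathbf{p}^t\cdot\mathbf{x}^t$; $U$ $\mathbf{e}$-cost-rationalizes $\mathcal{O}$ if for every $t$, $e^t\,\mathbf{p}^t\cdot\mathbf{x}^t\le\mathbf{p}^t\cdot\mathbf{x}$ for all $\mathbf{x}\in X$ with $U(\mathbf{x})\ge U(\mathbf{x}^t)$. $U$ is locally nonsatiated if for every $\mathbf{x}$ and $\varepsilon>0$ there is $\mathbf{y}$ with $\|\mathbf{y}-\mathbf{x}\|<\varepsilon$ and $U(\mathbf{y})>U(\mathbf{x})$. Revealed preference relations: $\mathbf{x}^t \succcurlyeq_0^* \mathbf{x}^s$ (directly revealed preferred) if $\mathbf{p}^t\cdot\mathbf{x}^s \le e^t\,\mathbf{p}^t\cdot\mathbf{x}^t$; $\mathbf{x}^t \succ_0^* \mathbf{x}^s$ (strictly directly revealed preferred) if $\mathbf{p}^t\cdot\mathbf{x}^s < e^t\,\mathbf{p}^t\cdot\mathbf{x}^t$; $\mathbf{x}^t \succcurlyeq^* \mathbf{x}^s$ (revealed preferred) if there is a finite chain $\mathbf{x}^t \succcurlyeq_0^* \mathbf{x}^i \succcurlyeq_0^* \cdots \succcurlyeq_0^* \mathbf{x}^s$ among the observed bundles. $\mathcal{O}$ obeys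 $\mathbf{e}$-GARP if for all $t,s$, $\mathbf{x}^t \succcurlyeq^* \mathbf{x}^s$ implies that $\mathbf{x}^s \succ_0^* \mathbf{x}^t$ does not hold. *)

theory Defs
  imports "HOL-Analysis.Analysis"
begin

text \<open>Goods are indexed by a finite type 'n (so \<ell> = CARD('n) \<ge> 1).
  Observations are indexed by t \<in> {1..T}; prices p t, bundles x t, efficiency levels e t.\<close>

definition nonneg_orthant :: "(real ^ 'n) set" where
  "nonneg_orthant = {x. \<forall>i. 0 \<le> x $ i}"

definition e_rationalizes ::
  "(real ^ 'n) set \<Rightarrow> (real ^ 'n \<Rightarrow> real) \<Rightarrow> nat \<Rightarrow> (nat \<Rightarrow> real ^ 'n) \<Rightarrow> (nat \<Rightarrow> real ^ 'n) \<Rightarrow> (nat \<Rightarrow> real) \<Rightarrow> bool" where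
  "e_rationalizes X U T p x e \<longleftrightarrow>
     (\<forall>t\<in>{1..T}. \<forall>y\<in>X. p t \<bullet> y \<le> e t * (p t \<bullet> x t) \<longrightarrow> U (x t) \<ge> U y)"

definition e_cost_rationalizes ::
  "(real ^ 'n) set \<Rightarrow> (real ^ 'n \<Rightarrow> real) \<Rightarrow> nat \<Rightarrow> (nat \<Rightarrow> real ^ 'n) \<Rightarrow> (nat \<Rightarrow> real ^ 'n) \<Rightarrow> (nat \<Rightarrow> real) \<Rightarrow> bool" where
  "e_cost_rationalizes X U T p x e \<longleftrightarrow>
     (\<forall>t\<in>{1..T}. \<forall>y\<in>X. U y \<ge> U (x t) \<longrightarrow> e t * (p t \<bullet> x t) \<le> p t \<bullet> y)"

definition locally_nonsatiated :: "(real ^ 'n) set \<Rightarrow> (real ^ 'n \<Rightarrow> real) \<Rightarrow> bool" where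
  "locally_nonsatiated X U \<longleftrightarrow>
     (\<forall>x\<in>X. \<forall>\<epsilon>>0. \<exists>y\<in>X. norm (y - x) < \<epsilon> \<and> U y > U x)"

definition dir_rev_pref :: "(nat \<Rightarrow> real ^ 'n) \<Rightarrow> (nat \<Rightarrow> real ^ 'n) \<Rightarrow> (nat \<Rightarrow> real) \<Rightarrow> nat \<Rightarrow> nat \<Rightarrow> bool" where
  "dir_rev_pref p x e t s \<longleftrightarrow> p t \<bullet> x s \<le> e t * (p t \<bullet> x t)"

definition strict_dir_rev_pref :: "(nat \<Rightarrow> real ^ 'n) \<Rightarrow> (nat \<Rightarrow> real ^ 'n) \<Rightarrow> (nat \<Rightarrow> real) \<Rightarrow> nat \<Rightarrow> nat \<Rightarrow> bool" where
  "strict_dir_rev_pref p x e t s \<longleftrightarrow> p t \<bullet> x s < e t * (p t \<bullet> x t)"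

definition rev_pref :: "nat \<Rightarrow> (nat \<Rightarrow> real ^ 'n) \<Rightarrow> (nat \<Rightarrow> real ^ 'n) \<Rightarrow> (nat \<Rightarrow> real) \<Rightarrow> nat \<Rightarrow> nat \<Rightarrow> bool" where
  "rev_pref T p x e = (\<lambda>a b. a \<in> {1..T} \<and> b \<in> {1..T} \<and> dir_rev_pref p x e a b)\<^sup>+\<^sup>+"

definition e_GARP :: "nat \<Rightarrow> (nat \<Rightarrow> real ^ 'n) \<Rightarrow> (nat \<Rightarrow> real ^ 'n) \<Rightarrow> (nat \<Rightarrow> real) \<Rightarrow> bool" where
  "e_GARP T p x e \<longleftrightarrow>
     (\<forall>t\<in>{1..T}. \<forall>s\<in>{1..T}. rev_pref T p x e t s \<longrightarrow> \<not> strict_dir_rev_pref p x e s t)"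

end

theory Submission
  imports Defs
begin

lemma inner_pos_aux:
  fixes p y :: "real ^ 'n"
  assumes "\<forall>i. 0 < p $ i" "y \<in> nonneg_orthant" "y \<noteq> 0"
  shows "0 < p \<bullet> y"
proof -
  obtain i where i: "y $ i \<noteq> 0" using assms(3) by (metis vec_eq_iff zero_index)
  have nn: "\<forall>j. 0 \<le> y $ j" using assms(2) by (simp add: nonneg_orthant_def)
  have "0 < p $ i * y $ i" using i nn assms(1) by (metis less_eq_real_def mult_pos_pos)
  moreover have "\<forall>j\<in>UNIV. 0 \<le> p $ j * y $ j" using nn assms(1) by (simp add: less_imp_le)
  ultimately have "0 < (\<Sum>j\<in>UNIV. p $ j * y $ j)"
    by (intro sum_pos2[where i=i]) auto
  thus ?thesis by (simp add: inner_vec_def)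
qed

lemma inner_nonneg_aux:
  fixes p y :: "real ^ 'n"
  assumes "\<forall>i. 0 < p $ i" "y \<in> nonneg_orthant"
  shows "0 \<le> p \<bullet> y"
proof -
  have nn: "\<forall>j. 0 \<le> y $ j" using assms(2) by (simp add: nonneg_orthant_def)
  have "\<forall>j\<in>UNIV. 0 \<le> p $ j * y $ j" using nn assms(1) by (simp add: less_imp_le)
  hence "0 \<le> (\<Sum>j\<in>UNIV. p $ j * y $ j)" by (intro sum_nonneg) auto
  thus ?thesis by (simp add: inner_vec_def)
qed

lemma chain_aux:
  assumes step: "\<And>a b. a \<in> {1..T} \<Longrightarrow> b \<in> {1..T} \<Longrightarrow> dir_rev_pref p x e a b \<Longrightarrow> U (x a) \<ge> (U (x b) :: real)"
  assumes "rev_pref T p x e t s"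
  shows "U (x t) \<ge> U (x s)"
  using assms(2) unfolding rev_pref_def
proof (induction rule: tranclp_induct)
  case (base y) thus ?case using step by blast
next
  case (step y z) thus ?case using assms(1) by fastforce
qed

theorem proposition2:
  fixes T :: nat and p x :: "nat \<Rightarrow> real ^ 'n" and e :: "nat \<Rightarrow> real"
  assumes p_pos: "\<forall>t\<in>{1..T}. \<forall>i. 0 < p t $ i"
    and x_nonneg: "\<forall>t\<in>{1..T}. x t \<in> nonneg_orthant \<and> x t \<noteq> 0"
    and e_range: "\<forall>t\<in>{1..T}. 0 < e t \<and> e t \<le> 1"
    and cond: "(\<exists>X U. X \<subseteq> nonneg_orthant \<and> (\<forall>t\<in>{1..T}. x t \<in> X) \<and>
                  e_rationalizes X U T p x e \<and> e_cost_rationalizes X U T p x e)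
             \<or> (\<exists>U. locally_nonsatiated nonneg_orthant U \<and> e_rationalizes nonneg_orthant U T p x e)
             \<or> (\<exists>U. continuous_on nonneg_orthant U \<and> e_cost_rationalizes nonneg_orthant U T p x e)"
  shows "e_GARP T p x e"
  unfolding e_GARP_def
proof (intro ballI impI notI)
  fix t s assume t: "t \<in> {1..T}" and s: "s \<in> {1..T}" and rp: "rev_pref T p x e t s"
    and sd: "strict_dir_rev_pref p x e s t"
  have sd': "p s \<bullet> x t < e s * (p s \<bullet> x s)" using sd by (simp add: strict_dir_rev_pref_def)
  from cond show False
  proof (elim disjE exE conjE)
    fix X U assume XS: "X \<subseteq> nonneg_orthant" and xX: "\<forall>t\<in>{1..T}. x t \<in> X"
      and r: "e_rationalizes X U T p x e" and c: "e_cost_rationalizes X U T p x e"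
    have "U (x t) \<ge> U (x s)"
      by (rule chain_aux[OF _ rp]) (use r xX in \<open>auto simp: e_rationalizes_def dir_rev_pref_def\<close>)
    hence "e s * (p s \<bullet> x s) \<le> p s \<bullet> x t" using c s t xX by (auto simp: e_cost_rationalizes_def)
    thus False using sd' by simp
  next
    fix U assume l: "locally_nonsatiated nonneg_orthant U" and r: "e_rationalizes nonneg_orthant U T p x e"
    have ge: "U (x t) \<ge> U (x s)"
      by (rule chain_aux[OF _ rp]) (use r x_nonneg in \<open>auto simp: e_rationalizes_def dir_rev_pref_def\<close>)
    define d where "d = e s * (p s \<bullet> x s) - p s \<bullet> x t"
    have dpos: "d > 0" using sd' by (simp add: d_def)
    define eps where "eps = d / (norm (p s) + 1)"
    have epos: "eps > 0" using dpos unfolding eps_def by (intro divide_pos_pos) (auto intro: add_nonneg_pos)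
    obtain y where y: "y \<in> nonneg_orthant" "norm (y - x t) < eps" "U y > U (x t)"
      using l x_nonneg t epos unfolding locally_nonsatiated_def by blast
    have "p s \<bullet> (y - x t) \<le> norm (p s) * norm (y - x t)"
      by (metis Cauchy_Schwarz_ineq2 abs_le_D1)
    also have "\<dots> \<le> norm (p s) * eps" using y(2) by (simp add: mult_left_mono)
    also have "\<dots> < d"
    proof -
      have np: "0 < norm (p s) + 1" by (simp add: add_nonneg_pos)
      have "norm (p s) * eps = d * (norm (p s) / (norm (p s) + 1))" by (simp add: eps_def)
      also have "\<dots> < d * 1" using dpos np by (intro mult_strict_left_mono) auto
      finally show ?thesis by simp
    qed
    finally have "p s \<bullet> y \<le> e s * (p s \<bullet> x s)" by (simp add: d_def inner_diff_right)
    hence "U (x s) \<ge> U y" using r s y(1) by (auto simp: e_rationalizes_def)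
    thus False using ge y(3) by simp
  next
    fix U assume cU: "continuous_on nonneg_orthant U" and c: "e_cost_rationalizes nonneg_orthant U T p x e"
    have ge: "U (x t) \<ge> U (x s)"
    proof (rule chain_aux[OF _ rp])
      fix a b assume a: "a \<in> {1..T}" and b: "b \<in> {1..T}" and ab: "dir_rev_pref p x e a b"
      show "U (x a) \<ge> U (x b)"
      proof (rule ccontr)
        assume "\<not> U (x a) \<ge> U (x b)"
        hence gap: "U (x b) - U (x a) > 0" by simp
        have xb: "x b \<in> nonneg_orthant" using x_nonneg b by auto
        obtain dd where dd: "dd > 0" "\<forall>x'\<in>nonneg_orthant. dist x' (x b) < dd \<longrightarrow> dist (U x') (U (x b)) < U (x b) - U (x a)"
          using cU xb gap unfolding continuous_on_iff by blast
        define m where "m = min (1/2) (dd / (2 * (norm (x b) + 1)))"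
        have nb: "0 < 2 * (norm (x b) + 1)" by (simp add: add_nonneg_pos)
        have m0: "0 < m" "m \<le> 1/2" using dd nb unfolding m_def by (simp_all add: min_def divide_pos_pos)
        define y where "y = (1 - m) *\<^sub>R x b"
        have yo: "y \<in> nonneg_orthant" using xb m0 by (auto simp: y_def nonneg_orthant_def)
        have "dist y (x b) = m * norm (x b)"
          using m0 by (simp add: y_def dist_norm algebra_simps norm_minus_commute)
        also have "\<dots> \<le> dd / (2 * (norm (x b) + 1)) * norm (x b)"
          by (intro mult_right_mono) (auto simp: m_def)
        also have "\<dots> < dd" using dd(1)
          by (simp add: field_simps add_pos_nonneg)
        finally have "dist (U y) (U (x b)) < U (x b) - U (x a)" using dd(2) yo by blast
        hence Uy: "U y \<ge> U (x a)" by (simp add: dist_real_def)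
        have pa: "0 < p a \<bullet> x a" using inner_pos_aux p_pos x_nonneg a by blast
        have pb: "0 \<le> p a \<bullet> x b" using inner_nonneg_aux p_pos xb a by blast
        have ea: "0 < e a" using e_range a by auto
        have D: "0 < e a * (p a \<bullet> x a)" using pa ea by simp
        have ab': "p a \<bullet> x b \<le> e a * (p a \<bullet> x a)" using ab by (simp add: dir_rev_pref_def)
        have "p a \<bullet> y = (1 - m) * (p a \<bullet> x b)" by (simp add: y_def)
        also have "\<dots> \<le> (1 - m) * (e a * (p a \<bullet> x a))" using ab' m0 by (intro mult_left_mono) auto
        also have "\<dots> < e a * (p a \<bullet> x a)" using D m0 by (simp add: algebra_simps)
        finally have lt: "p a \<bullet> y < e a * (p a \<bullet> x a)" .
        have "e a * (p a \<bullet> x a) \<le> p a \<bullet> y" using c a yo Uy by (auto simp: e_cost_rationalizes_def)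
        thus False using lt by simp
      qed
    qed
    hence "e s * (p s \<bullet> x s) \<le> p s \<bullet> x t" using c s t x_nonneg by (auto simp: e_cost_rationalizes_def)
    thus False using sd' by simp
  qed
qed

end
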